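(* Let $M=\{0\}\cup\{2^{-n}:n\in\mathbb{N}\}\subseteq\mathbb{R}$ and $K=M\times[0,1]\subseteq\mathbb{R}^2$. Then $C^1(K)\neq C^1(\mathbb{R}^2|K)$, i.e. there is $f\in C^1(K)$ which is not the restriction to $K$ of any $C^1$ function on $\mathbb{R}^2$.
   Context: $C^1(K)$ is the set of $f:K\to\mathbb{R}$ admitting a continuous $df:K\to\mathbb{R}^2$ with $\lim_{y\to x,\,y\in K\setminus\{x\}}\frac{f(y)-f(x)-\langle df(x),y-x\rangle}{|y-x|}=0$ for all $x\in K$. $C^1(\mathbb{R}^2|K)=\{g|_K: g\in C^1(\mathbb{R}^2)\}$. *)

theory Defs
  imports "HOL-Analysis.Analysis"
begin

definition C1_on :: "(real \<times> real) set \<Rightarrow> ((real \<times> real) \<Rightarrow> real) \<Rightarrow> bool" where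
  "C1_on K f \<longleftrightarrow> (\<exists>df :: (real \<times> real) \<Rightarrow> (real \<times> real).
      continuous_on K df \<and>
      (\<forall>x\<in>K. ((\<lambda>y. (f y - f x - inner (df x) (y - x)) / norm (y - x))
               \<longlongrightarrow> 0) (at x within K - {x})))"

definition C1_R2 :: "((real \<times> real) \<Rightarrow> real) \<Rightarrow> bool" where
  "C1_R2 g \<longleftrightarrow> (\<exists>dg :: (real \<times> real) \<Rightarrow> (real \<times> real).
      (\<forall>x. (g has_derivative (\<lambda>h. inner (dg x) h)) (at x)) \<and>
      continuous_on UNIV dg)"

definition C1_restr :: "(real \<times> real) set \<Rightarrow> ((real \<times> real) \<Rightarrow> real) set" where
  "C1_restr K = {f. \<exists>g. C1_R2 g \<and> (\<forall>x\<in>K. f x = g x)}"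

end

theory Submission
  imports Defs
begin

definition ff :: "real \<times> real \<Rightarrow> real" where
  "ff y = fst y ^ 2 * snd y ^ 2 / (fst y ^ 2 + snd y ^ 4)"
definition DD :: "real \<times> real \<Rightarrow> real" where
  "DD y = 2 * fst y ^ 2 * snd y * (fst y ^ 2 - snd y ^ 4) / (fst y ^ 2 + snd y ^ 4) ^ 2"

lemma DD_bound: "\<bar>DD y\<bar> \<le> 2 * \<bar>snd y\<bar>"
proof (cases "fst y ^ 2 + snd y ^ 4 = 0")
  case True then show ?thesis by (simp add: DD_def)
next
  case False
  define x where "x = fst y" define t where "t = snd y"
  have d: "x^2 + t^4 > 0"
  proof -
    have "x^2 + t^4 \<ge> 0" by simp
    moreover have "x^2 + t^4 \<noteq> 0" using False by (simp add: x_def t_def)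
    ultimately show ?thesis by linarith
  qed
  have "\<bar>DD y\<bar> = 2 * x^2 * \<bar>t\<bar> * \<bar>x^2 - t^4\<bar> / (x^2+t^4)^2"
    by (simp add: DD_def x_def t_def abs_mult)
  also have "\<dots> \<le> 2 * x^2 * \<bar>t\<bar> * (x^2 + t^4) / (x^2+t^4)^2"
  proof -
    have "0 \<le> x^2" "0 \<le> t^4" by auto
    then have "\<bar>x^2 - t^4\<bar> \<le> x^2 + t^4" by linarith
    then show ?thesis by (intro divide_right_mono mult_left_mono) auto
  qed
  also have "\<dots> = 2 * x^2 * \<bar>t\<bar> / (x^2+t^4)" using d by (simp add: power2_eq_square)
  also have "\<dots> \<le> 2 * \<bar>t\<bar>" using d
  proof -
    have "x^2 * \<bar>t\<bar> \<le> \<bar>t\<bar> * (x^2 + t^4)"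
      by (simp add: algebra_simps)
    then show ?thesis using d by (simp add: divide_le_eq)
  qed
  finally show ?thesis by (simp add: t_def)
qed

lemma DD_cont: "isCont DD p"
proof (cases "fst p ^ 2 + snd p ^ 4 = 0")
  case True
  then have p: "p = 0"
  proof -
    have "fst p ^ 2 = 0 \<and> snd p ^ 4 = 0"
      using True by (subst (asm) add_nonneg_eq_0_iff) auto
    then show ?thesis by (simp add: prod_eq_iff)
  qed
  have "(DD \<longlongrightarrow> 0) (at p)"
  proof (rule Lim_null_comparison)
    show "\<forall>\<^sub>F y in at p. norm (DD y) \<le> 2 * \<bar>snd y\<bar>" using DD_bound by simp
    have "((\<lambda>y. 2 * \<bar>snd y\<bar>) \<longlongrightarrow> 2 * \<bar>snd p\<bar>) (at p)"
      by (intro tendsto_intros)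
    then show "((\<lambda>y. 2 * \<bar>snd y\<bar>) \<longlongrightarrow> 0) (at p)" using p by simp
  qed
  moreover have "DD p = 0" using p by (simp add: DD_def)
  ultimately show ?thesis unfolding isCont_def by simp
next
  case False
  then show ?thesis unfolding DD_def by (intro continuous_intros) auto
qed

lemma phi_deriv:
  assumes "x0 \<noteq> 0"
  shows "((\<lambda>t. ff (x0, t)) has_real_derivative DD (x0, t0)) (at t0)"
proof -
  have d: "x0^2 + t^4 > 0" for t :: real
  proof -
    have "x0^2 > 0" using assms by simp
    moreover have "t^4 \<ge> 0" by simp
    ultimately show ?thesis by linarith
  qed
  have "((\<lambda>t. x0^2 * t^2 / (x0^2 + t^4)) has_real_derivative
      ((x0^2 * (2 * t0)) * (x0^2 + t0^4) - x0^2 * t0^2 * (4 * t0^3)) / (x0^2 + t0^4)^2) (at t0)"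
    using d[of t0]
    by (auto intro!: derivative_eq_intros simp: power2_eq_square)
  moreover have "((x0^2 * (2 * t0)) * (x0^2 + t0^4) - x0^2 * t0^2 * (4 * t0^3)) / (x0^2 + t0^4)^2
      = DD (x0, t0)"
    unfolding DD_def by (simp add: algebra_simps power2_eq_square power4_eq_xxxx power3_eq_cube)
  ultimately show ?thesis by (simp add: ff_def)
qed

lemma whit_pos:
  assumes x0: "x0 > 0" and iso: "\<forall>y\<in>K. dist y (x0,t0) < x0/2 \<longrightarrow> fst y = x0"
  shows "((\<lambda>y. (ff y - ff (x0,t0) - inner (0, DD (x0,t0)) (y - (x0,t0))) / norm (y - (x0,t0)))
               \<longlongrightarrow> 0) (at (x0,t0) within K - {(x0,t0)})"
proof -
  define p where "p = (x0, t0)"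
  define G where "G = (\<lambda>y::real\<times>real. ff (x0, snd y))"
  have "((\<lambda>t. ff (x0, t)) \<circ> snd has_derivative (\<lambda>h. DD (x0,t0) * h) \<circ> snd) (at p within K - {p})"
    apply (rule diff_chain_within)
     apply (rule has_derivative_snd) apply (rule has_derivative_ident)
    using has_derivative_at_withinI[OF phi_deriv[of x0 t0, unfolded has_field_derivative_def]] x0
    by (simp add: p_def)
  then have "(G has_derivative (\<lambda>h. inner (0, DD (x0,t0)) h)) (at p within K - {p})"
    by (simp add: G_def o_def inner_prod_def split_beta)
  then have L: "((\<lambda>y. (G y - G p - inner (0, DD (x0,t0)) (y - p)) /\<^sub>R norm (y - p)) \<longlongrightarrow> 0)
       (at p within K - {p})"
    by (simp add: has_derivative_at_within)
  have ev: "\<forall>\<^sub>F y in at p within K - {p}. (G y - G p - inner (0, DD (x0,t0)) (y - p)) /\<^sub>R norm (y - p)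
     = (ff y - ff p - inner (0, DD (x0,t0)) (y - p)) / norm (y - p)"
    unfolding eventually_at
  proof (intro exI[of _ "x0/2"] conjI ballI impI)
    show "x0/2 > 0" using x0 by simp
    fix y assume "y \<in> K - {p}" "y \<noteq> p \<and> dist y p < x0 / 2"
    then have "fst y = x0" using iso unfolding p_def by auto
    then have "G y = ff y" "G p = ff p" unfolding G_def p_def by (auto simp: prod_eq_iff)
    then show "(G y - G p - inner (0, DD (x0,t0)) (y - p)) /\<^sub>R norm (y - p)
     = (ff y - ff p - inner (0, DD (x0,t0)) (y - p)) / norm (y - p)"
      by (simp add: divide_inverse mult.commute)
  qed
  show ?thesis using Lim_transform_eventually[OF L ev] unfolding p_def .
qed

lemma ff_nonneg: "ff y \<ge> 0"
  unfolding ff_def by simp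

lemma ff_le1: "ff y \<le> snd y ^ 2"
proof (cases "fst y ^ 2 + snd y ^ 4 = 0")
  case True then show ?thesis by (simp add: ff_def)
next
  case False
  have d: "fst y ^ 2 + snd y ^ 4 > 0"
  proof -
    have "fst y ^ 2 + snd y ^ 4 \<ge> 0" by simp
    then show ?thesis using False by linarith
  qed
  have "fst y ^ 2 * snd y ^ 2 \<le> snd y ^ 2 * (fst y ^ 2 + snd y ^ 4)"
    by (simp add: algebra_simps)
  then show ?thesis using d unfolding ff_def by (simp add: divide_le_eq)
qed

lemma ff_eq2: "ff y = \<bar>fst y\<bar> * (\<bar>fst y\<bar> * snd y ^ 2 / (fst y ^ 2 + snd y ^ 4))"
  unfolding ff_def by (simp add: power2_eq_square abs_mult_self_eq)

lemma whit_zero: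
  assumes "t0 \<ge> 0"
  shows "((\<lambda>y. (ff y - ff (0,t0) - inner (0, DD (0,t0)) (y - (0,t0))) / norm (y - (0,t0)))
               \<longlongrightarrow> 0) (at (0,t0) within S)"
proof -
  define p where "p = ((0::real), t0)"
  have simp1: "ff (0,t0) = 0" "DD (0,t0) = 0" by (auto simp: ff_def DD_def)
  have "((\<lambda>y. ff y / norm (y - p)) \<longlongrightarrow> 0) (at p within S)"
  proof (cases "t0 = 0")
    case True
    show ?thesis
    proof (rule Lim_null_comparison)
      show "\<forall>\<^sub>F y in at p within S. norm (ff y / norm (y - p)) \<le> \<bar>snd y\<bar>"
      proof (intro always_eventually allI)
        fix y :: "real \<times> real"
        show "norm (ff y / norm (y - p)) \<le> \<bar>snd y\<bar>"
        proof (cases "snd y = 0")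
          case True
          then have "ff y = 0" by (simp add: ff_def)
          then show ?thesis by simp
        next
          case False
          have n: "\<bar>snd y\<bar> \<le> norm (y - p)" 
          proof -
            have "norm (snd y) \<le> norm (fst y, snd y)" by (rule norm_snd_le)
            moreover have "y - p = y" using True by (simp add: p_def prod_eq_iff)
            ultimately show ?thesis by simp
          qed
          have "norm (ff y / norm (y - p)) = ff y / norm (y - p)" using ff_nonneg[of y] by simp
          also have "\<dots> \<le> snd y ^ 2 / \<bar>snd y\<bar>"
            using n False ff_le1[of y] ff_nonneg[of y] by (intro frac_le) auto
          also have "\<dots> = \<bar>snd y\<bar> * \<bar>snd y\<bar> / \<bar>snd y\<bar>" by (simp add: power2_eq_square)
          also have "\<dots> = \<bar>snd y\<bar>" using False by (rule_tac nonzero_mult_div_cancel_right) simp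
          finally show ?thesis .
        qed
      qed
      have "((\<lambda>y. \<bar>snd y\<bar>) \<longlongrightarrow> \<bar>snd p\<bar>) (at p within S)" by (intro tendsto_intros)
      then show "((\<lambda>y. \<bar>snd y\<bar>) \<longlongrightarrow> 0) (at p within S)" using True by (simp add: p_def)
    qed
  next
    case False
    define h where "h = (\<lambda>y::real\<times>real. \<bar>fst y\<bar> * snd y ^ 2 / (fst y ^ 2 + snd y ^ 4))"
    show ?thesis
    proof (rule Lim_null_comparison)
      show "\<forall>\<^sub>F y in at p within S. norm (ff y / norm (y - p)) \<le> h y"
      proof (intro always_eventually allI)
        fix y :: "real \<times> real"
        have h0: "h y \<ge> 0" unfolding h_def by simp
        show "norm (ff y / norm (y - p)) \<le> h y"
        proof (cases "fst y = 0")
          case True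
          then have "ff y = 0" by (simp add: ff_def)
          then show ?thesis using h0 by simp
        next
          case False
          have n: "\<bar>fst y\<bar> \<le> norm (y - p)" 
          proof -
            have "y - p = (fst y, snd y - t0)" by (simp add: p_def prod_eq_iff)
            moreover have "norm (fst y) \<le> norm (fst y, snd y - t0)" by (rule norm_fst_le)
            ultimately show ?thesis by simp
          qed
          have "norm (ff y / norm (y - p)) = ff y / norm (y - p)" using ff_nonneg[of y] by simp
          also have "\<dots> \<le> ff y / \<bar>fst y\<bar>"
            using n False ff_nonneg[of y] by (intro divide_left_mono) (auto intro!: mult_pos_pos)
          also have "\<dots> = h y" using False by (simp add: ff_eq2[of y] h_def)
          finally show ?thesis .
        qed
      qed
      have "t0 ^ 4 \<noteq> 0" using False by simp
      then have "(h \<longlongrightarrow> h p) (at p within S)" unfolding h_def p_def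
        by (intro tendsto_intros) auto
      then show "(h \<longlongrightarrow> 0) (at p within S)" by (simp add: h_def p_def)
    qed
  qed
  moreover have "inner (0::real, 0::real) z = 0" for z by (simp add: inner_prod_def)
  ultimately show ?thesis by (simp add: simp1 p_def)
qed

lemma pow_iso:
  assumes "\<bar>(1/2::real)^m - (1/2)^n\<bar> < (1/2)^n / 2"
  shows "m = n"
proof (rule ccontr)
  assume "m \<noteq> n"
  then consider "Suc m \<le> n" | "Suc n \<le> m" by linarith
  then show False
  proof cases
    case 1
    have "(1/2::real)^n \<le> (1/2)^(Suc m)" by (rule power_decreasing[OF 1]) auto
    moreover have "(1/2::real)^n > 0" by simp
    moreover have "(1/2::real)^(Suc m) = (1/2)^m/2" by simp
    ultimately show False using assms by arith
  next
    case 2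
    have "(1/2::real)^m \<le> (1/2)^(Suc n)" by (rule power_decreasing[OF 2]) auto
    moreover have "(1/2::real)^m > 0" by simp
    moreover have "(1/2::real)^(Suc n) = (1/2)^n/2" by simp
    ultimately show False using assms by arith
  qed
qed

lemma mvt_g:
  assumes dg: "\<forall>x. (g has_derivative (\<lambda>h. inner (dg x) h)) (at x)" and a: "a > (0::real)"
  shows "\<exists>\<xi>. a/2 < \<xi> \<and> \<xi> < a \<and> g (a, t) - g (a/2, t) = (a - a/2) * fst (dg (\<xi>, t))"
proof -
  have "((\<lambda>x. g (x, t)) has_real_derivative fst (dg (x, t))) (at x)" for x
  proof -
    have "((\<lambda>x. (x, t)) has_derivative (\<lambda>h. (h, 0))) (at x)"
      by (auto intro!: derivative_eq_intros)
    from diff_chain_at[OF this dg[rule_format, of "(x,t)"]]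
    have "((\<lambda>x. g (x, t)) has_derivative (\<lambda>h. inner (dg (x,t)) (h, 0))) (at x)"
      by (simp add: o_def)
    moreover have "(\<lambda>h. inner (dg (x,t)) (h, 0)) = (*) (fst (dg (x, t)))"
      by (auto simp: fun_eq_iff inner_prod_def split_beta)
    ultimately show ?thesis by (simp add: has_field_derivative_def)
  qed
  then show ?thesis using MVT2[of "a/2" a "\<lambda>x. g (x, t)" "\<lambda>x. fst (dg (x, t))"] a by auto
qed

lemma ff_vals:
  assumes "s > (0::real)"
  shows "ff (s^2, s) = s^2/2" "ff (s^2/2, s) = s^2/5" "ff (a, 0) = 0"
  using assms by (auto simp: ff_def field_simps power2_eq_square power4_eq_xxxx)

lemma not_ext:
  assumes KK: "K = ({0} \<union> {(1/2) ^ n | n :: nat. True}) \<times> {0..1}"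
    and g: "C1_R2 g" and eq: "\<forall>x\<in>K. ff x = g x"
  shows False
proof -
  obtain dg where dg: "\<forall>x. (g has_derivative (\<lambda>h. inner (dg x) h)) (at x)"
    and cdg: "continuous_on UNIV dg" using g unfolding C1_R2_def by blast
  define s where "s = (\<lambda>m::nat. (1/2::real)^m)"
  have spos: "s m > 0" for m by (simp add: s_def)
  have inK1: "(s m ^ 2, s m) \<in> K" for m
  proof -
    have "s m ^ 2 = (1/2)^(2*m)" by (simp add: s_def power_mult mult.commute)
    moreover have "s m \<le> 1" by (simp add: s_def power_le_one)
    ultimately show ?thesis using spos[of m] unfolding KK by auto
  qed
  have inK2: "(s m ^ 2 / 2, s m) \<in> K" for m
  proof -
    have e2: "s m ^ 2 / 2 = (1/2)^(Suc (2*m))" by (simp add: s_def power_mult mult.commute)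
    moreover have "s m \<le> 1" by (simp add: s_def power_le_one)
    have "s m ^ 2 / 2 \<in> {(1/2::real) ^ n | n :: nat. True}" using e2 by blast
    moreover have "s m \<in> {0..1}" using spos[of m] \<open>s m \<le> 1\<close> by simp
    ultimately show ?thesis unfolding KK by blast
  qed
  have inK3: "(s m ^ 2, 0) \<in> K" "(s m ^ 2 / 2, 0) \<in> K" for m
    using inK1[of m] inK2[of m] unfolding KK by auto
  have "\<forall>m. \<exists>\<xi>. s m ^ 2 / 2 < \<xi> \<and> \<xi> < s m ^ 2 \<and>
      g (s m ^ 2, s m) - g (s m ^ 2 / 2, s m) = (s m ^ 2 - s m ^ 2 / 2) * fst (dg (\<xi>, s m))"
    by (intro allI mvt_g[OF dg]) (use spos in \<open>auto simp: less_le\<close>)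
  then obtain xi1 where xi1: "\<And>m. s m ^ 2 / 2 < xi1 m \<and> xi1 m < s m ^ 2 \<and>
      g (s m ^ 2, s m) - g (s m ^ 2 / 2, s m) = (s m ^ 2 - s m ^ 2 / 2) * fst (dg (xi1 m, s m))"
    by metis
  have "\<forall>m. \<exists>\<xi>. s m ^ 2 / 2 < \<xi> \<and> \<xi> < s m ^ 2 \<and>
      g (s m ^ 2, 0) - g (s m ^ 2 / 2, 0) = (s m ^ 2 - s m ^ 2 / 2) * fst (dg (\<xi>, 0))"
    by (intro allI mvt_g[OF dg]) (use spos in \<open>auto simp: less_le\<close>)
  then obtain xi2 where xi2: "\<And>m. s m ^ 2 / 2 < xi2 m \<and> xi2 m < s m ^ 2 \<and>
      g (s m ^ 2, 0) - g (s m ^ 2 / 2, 0) = (s m ^ 2 - s m ^ 2 / 2) * fst (dg (xi2 m, 0))"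
    by metis
  have v1: "fst (dg (xi1 m, s m)) = 3/5" for m
  proof -
    define A where "A = s m ^ 2"
    define F where "F = fst (dg (xi1 m, s m))"
    have A: "A > 0" using spos[of m] by (simp add: A_def)
    have "g (s m ^ 2, s m) = s m ^ 2 / 2" "g (s m ^ 2 / 2, s m) = s m ^ 2 / 5"
      using eq inK1[of m] inK2[of m] ff_vals[OF spos[of m]] by auto
    then have "A / 2 - A / 5 = (A - A / 2) * F"
      using xi1[of m] unfolding A_def F_def by metis
    then have "A * (3/10) = A * (F / 2)" by (simp add: algebra_simps)
    then have "3/10 = F/2" using A by simp
    then show ?thesis unfolding F_def by simp
  qed
  have v2: "fst (dg (xi2 m, 0)) = 0" for m
  proof -
    define A where "A = s m ^ 2"
    define F where "F = fst (dg (xi2 m, 0))"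
    have A: "A > 0" using spos[of m] by (simp add: A_def)
    have "g (s m ^ 2, 0) = 0" "g (s m ^ 2 / 2, 0) = 0"
      using eq inK3[of m] ff_vals[OF spos[of m]] by auto
    then have "0 - 0 = (A - A / 2) * F"
      using xi2[of m] unfolding A_def F_def by metis
    then have "A * (F / 2) = 0" by (simp add: algebra_simps)
    then show ?thesis using A unfolding F_def by simp
  qed
  have s0: "s \<longlonglongrightarrow> 0" unfolding s_def by (rule LIMSEQ_power_zero) simp
  have a0: "(\<lambda>m. s m ^ 2) \<longlonglongrightarrow> 0" using tendsto_power[OF s0, of 2] by simp
  have a02: "(\<lambda>m. s m ^ 2 / 2) \<longlonglongrightarrow> 0" using tendsto_divide[OF a0 tendsto_const[of 2]] by simp
  have b1: "\<And>m. s m ^ 2 / 2 \<le> xi1 m" "\<And>m. xi1 m \<le> s m ^ 2" by (meson xi1 less_imp_le)+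
  have x1: "xi1 \<longlonglongrightarrow> 0"
    by (rule real_tendsto_sandwich[OF _ _ a02 a0]) (simp_all only: b1 eventually_True)
  have b2: "\<And>m. s m ^ 2 / 2 \<le> xi2 m" "\<And>m. xi2 m \<le> s m ^ 2" by (meson xi2 less_imp_le)+
  have x2: "xi2 \<longlonglongrightarrow> 0"
    by (rule real_tendsto_sandwich[OF _ _ a02 a0]) (simp_all only: b2 eventually_True)
  have ic: "isCont dg (0,0)" using cdg by (simp add: continuous_on_eq_continuous_at)
  have "(\<lambda>m. fst (dg (xi1 m, s m))) \<longlonglongrightarrow> fst (dg (0,0))"
    by (intro tendsto_fst isCont_tendsto_compose[OF ic] tendsto_Pair x1 s0)
  then have L1: "fst (dg (0,0)) = 3/5" using v1 by (simp add: LIMSEQ_const_iff)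
  have "(\<lambda>m. fst (dg (xi2 m, 0))) \<longlonglongrightarrow> fst (dg (0,0))"
    by (intro tendsto_fst isCont_tendsto_compose[OF ic] tendsto_Pair x2 tendsto_const)
  then have L2: "fst (dg (0,0)) = 0" using v2 by (simp add: LIMSEQ_const_iff)
  from L1 L2 show False by simp
qed

theorem mainTheorem13:
  fixes M :: "real set" and K :: "(real \<times> real) set"
  assumes "M = {0} \<union> {(1/2) ^ n | n :: nat. True}"
      and "K = M \<times> {0..1}"
  shows "\<exists>f. C1_on K f \<and> f \<notin> C1_restr K"
proof (intro exI conjI)
  show "ff \<notin> C1_restr K"
  proof
    assume "ff \<in> C1_restr K"
    then obtain g where "C1_R2 g" "\<forall>x\<in>K. ff x = g x" unfolding C1_restr_def by blast
    moreover have "K = ({0} \<union> {(1/2) ^ n | n :: nat. True}) \<times> {0..1}" using assms by simp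
    ultimately show False using not_ext by blast
  qed
  show "C1_on K ff"
    unfolding C1_on_def
  proof (intro exI[of _ "\<lambda>y. (0, DD y)"] conjI ballI)
    show "continuous_on K (\<lambda>y. (0::real, DD y))"
      by (intro continuous_on_Pair continuous_on_const continuous_at_imp_continuous_on ballI DD_cont)
    fix p assume pK: "p \<in> K"
    obtain x0 t0 where p: "p = (x0, t0)" by fastforce
    have t0: "t0 \<ge> 0" using pK assms p by auto
    have "x0 \<in> M" using pK assms p by auto
    then consider "x0 = 0" | n where "x0 = (1/2)^n" using assms by auto
    then show "((\<lambda>y. (ff y - ff p - inner (0, DD p) (y - p)) / norm (y - p)) \<longlongrightarrow> 0)
        (at p within K - {p})"
    proof cases
      case 1
      show ?thesis using whit_zero[OF t0] unfolding p 1 .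
    next
      case (2 n)
      have x0: "x0 > 0" using 2 by simp
      have iso: "\<forall>y\<in>K. dist y (x0,t0) < x0/2 \<longrightarrow> fst y = x0"
      proof (intro ballI impI)
        fix y assume yK: "y \<in> K" and d: "dist y (x0,t0) < x0/2"
        have d1: "dist (fst y) x0 < x0/2" using dist_fst_le[of y "(x0,t0)"] d by simp
        have "fst y \<in> M" using yK assms by auto
        then consider "fst y = 0" | m where "fst y = (1/2)^m" using assms by auto
        then show "fst y = x0"
        proof cases
          case 1 then show ?thesis using d1 x0 by (simp add: dist_real_def)
        next
          case (2 m)
          with d1 \<open>x0 = (1/2)^n\<close> have "m = n" by (intro pow_iso) (simp add: dist_real_def)
          then show ?thesis using 2 \<open>x0 = (1/2)^n\<close> by simp
        qed
      qed
      show ?thesis using whit_pos[OF x0 iso] unfolding p .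
    qed
  qed
qed

end
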